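(* Let $X$ be a totally disconnected compact metric space and $(X,\alpha,\mathbb{Z}^+)$ a dynamical system given by a continuous surjection $\alpha:X\to X$. If the system admits a forward Li-Yorke pair, then the Ellis semigroup $E(X,\mathbb{Z}^+)$ is not completely regular.
   Context: $E(X,\mathbb{Z}^+)$ is the closure of $\{\alpha^n:n\ge 0\}$ in $X^X$ (maps $X\to X$, pointwise convergence topology, composition as product). A semigroup is completely regular if for every element $a$ there exists $x$ with $a=axa$ and $ax=xa$. A pair $x,y\in X$ is a forward Li-Yorke pair if it is forward proximal, i.e. $\inf_{n\ge0}d(\alpha^nx,\alpha^ny)=0$, but not forward asymptotic, i.e. not $\lim_{n\to+\infty}d(\alpha^nx,\alpha^ny)=0$. *)

theory Defs
  imports "HOL-Analysis.Analysis"
begin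

definition totally_disconnected :: "'a::topological_space set \<Rightarrow> bool" where
  "totally_disconnected X \<longleftrightarrow> (\<forall>S. S \<subseteq> X \<and> connected S \<longrightarrow> (\<exists>a. S \<subseteq> {a}))"

text \<open>Maps X \<rightarrow> X are represented as extensional functions (value undefined off X),
i.e. elements of the product space X^X with the pointwise (product) topology.\<close>
definition maps_top :: "'a::topological_space set \<Rightarrow> ('a \<Rightarrow> 'a) topology" where
  "maps_top X = product_topology (\<lambda>_. top_of_set X) X"

definition mcomp :: "'a set \<Rightarrow> ('a \<Rightarrow> 'a) \<Rightarrow> ('a \<Rightarrow> 'a) \<Rightarrow> ('a \<Rightarrow> 'a)" where
  "mcomp X f g = restrict (f \<circ> g) X"

definition ellis_semigroup :: "'a::topological_space set \<Rightarrow> ('a \<Rightarrow> 'a) \<Rightarrow> ('a \<Rightarrow> 'a) set" where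
  "ellis_semigroup X \<alpha> = maps_top X closure_of {restrict (\<alpha> ^^ n) X | n. True}"

definition completely_regular :: "'s set \<Rightarrow> ('s \<Rightarrow> 's \<Rightarrow> 's) \<Rightarrow> bool" where
  "completely_regular S op \<longleftrightarrow>
     (\<forall>a\<in>S. \<exists>x\<in>S. a = op (op a x) a \<and> op a x = op x a)"

definition forward_Li_Yorke_pair :: "'a::metric_space set \<Rightarrow> ('a \<Rightarrow> 'a) \<Rightarrow> 'a \<Rightarrow> 'a \<Rightarrow> bool" where
  "forward_Li_Yorke_pair X \<alpha> x y \<longleftrightarrow> x \<in> X \<and> y \<in> X \<and>
     (INF n. dist ((\<alpha> ^^ n) x) ((\<alpha> ^^ n) y)) = 0 \<and>
     \<not> ((\<lambda>n. dist ((\<alpha> ^^ n) x) ((\<alpha> ^^ n) y)) \<longlonglongrightarrow> 0)"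

end

theory Submission
  imports Defs
begin

lemma diam2: "diameter {u, v} = dist u (v::'a::metric_space)"
proof -
  have e: "(\<lambda>(x,y). dist x y) ` ({u,v} \<times> {u,v}) = {0, dist u v}"
    by (auto simp: dist_commute)
  have "Sup {0, dist u v} = dist u v"
    by (rule cSup_eq_maximum) auto
  then show ?thesis unfolding diameter_def using e by simp
qed

lemma clopen_small:
  fixes X :: "'a::metric_space set"
  assumes "compact X" "totally_disconnected X" "u \<in> X" "e > 0"
  shows "\<exists>U. openin (top_of_set X) U \<and> closedin (top_of_set X) U \<and> u \<in> U \<and> U \<subseteq> ball u e"
proof -
  let ?T = "top_of_set X"
  have cs: "compact_space ?T" using assms(1)
    by (simp add: compact_space_subtopology compactin_euclidean_iff)
  have hs: "Hausdorff_space ?T" by (simp add: Hausdorff_space_subtopology Hausdorff_space_euclidean)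
  have cc: "connected_component_of_set ?T u = {u}"
  proof
    show "connected_component_of_set ?T u \<subseteq> {u}"
    proof -
      have "connectedin ?T (connected_component_of_set ?T u)" by (rule connectedin_connected_component_of)
      then have "connected (connected_component_of_set ?T u)" "connected_component_of_set ?T u \<subseteq> X"
        by (auto simp: connectedin_subtopology connectedin_iff_connected)
      then obtain a where "connected_component_of_set ?T u \<subseteq> {a}"
        using assms(2) unfolding totally_disconnected_def by blast
      moreover have "u \<in> connected_component_of_set ?T u" using assms(3)
        by (simp add: connected_component_of_refl)
      ultimately show ?thesis by blast
    qed
    show "{u} \<subseteq> connected_component_of_set ?T u" using assms(3)
      by (simp add: connected_component_of_refl)
  qed
  have "quasi_component_of ?T u = connected_component_of ?T u"
    using cs hs by (intro quasi_eq_connected_component_of) blast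
  then have q: "quasi_component_of_set ?T u = {u}" using cc by simp
  have qc: "{u} \<in> quasi_components_of ?T"
    using q assms(3) unfolding quasi_components_of_def by force
  have K: "compactin ?T (X - ball u e)"
    using assms(1) by (auto simp: compactin_subtopology compactin_euclidean_iff intro: compact_diff)
  have "disjnt {u} (X - ball u e)" using assms(4) by auto
  then have "separated_between ?T {u} (X - ball u e)"
    using separated_between_quasi_component_compact[OF qc K] by blast
  then obtain U V where UV: "openin ?T U" "openin ?T V" "U \<union> V = X" "disjnt U V" "{u} \<subseteq> U"
      "X - ball u e \<subseteq> V"
    unfolding separated_between_def by auto
  have UX: "U = X - V" using UV(3,4) by (auto simp: disjnt_def)
  have VX: "V \<subseteq> X" using UV(3) by auto
  have "closedin ?T U"
    unfolding closedin_def using UX VX UV(2) by (simp add: Diff_Diff_Int Int_absorb1)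
  moreover have "U \<subseteq> ball u e" using UX UV(6) by auto
  ultimately show ?thesis using UV(1,5) by blast
qed

lemma cells:
  fixes X :: "'a::metric_space set"
  assumes "compact X" "totally_disconnected X" "e > 0"
  obtains c :: "'a \<Rightarrow> 'a set set" where
    "\<And>u. u \<in> X \<Longrightarrow> openin (top_of_set X) {v \<in> X. c v = c u}"
    "\<And>u v. u \<in> X \<Longrightarrow> v \<in> X \<Longrightarrow> c u = c v \<Longrightarrow> dist u v < e"
proof -
  let ?T = "top_of_set X"
  define G where "G = {U. openin ?T U \<and> closedin ?T U \<and> (\<exists>w. U \<subseteq> ball w (e/2))}"
  have cov: "X \<subseteq> \<Union>G"
  proof
    fix u assume "u \<in> X"
    then obtain U where "openin ?T U \<and> closedin ?T U \<and> u \<in> U \<and> U \<subseteq> ball u (e/2)"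
      using clopen_small[OF assms(1,2)] assms(3) by (meson half_gt_zero)
    then show "u \<in> \<Union>G" unfolding G_def by blast
  qed
  have "compactin ?T X" using assms(1) by (simp add: compactin_subtopology compactin_euclidean_iff)
  moreover have "\<forall>U\<in>G. openin ?T U" unfolding G_def by blast
  ultimately obtain F where F: "finite F" "F \<subseteq> G" "X \<subseteq> \<Union>F"
    using cov unfolding compactin_def by meson
  define c where "c v = {U \<in> F. v \<in> U}" for v
  show ?thesis
  proof
    fix u assume u: "u \<in> X"
    have eq: "{v \<in> X. c v = c u} = (\<Inter>U\<in>F. (if u \<in> U then U else X - U)) \<inter> topspace ?T"
      unfolding c_def by auto
    show "openin ?T {v \<in> X. c v = c u}"
      unfolding eq
    proof (rule openin_INT[OF F(1)])
      fix U assume "U \<in> F"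
      then have "openin ?T U" "closedin ?T U" using F(2) unfolding G_def by auto
      then show "openin ?T (if u \<in> U then U else X - U)"
        using openin_diff[of ?T X U] by auto
    qed
  next
    fix u v assume uv: "u \<in> X" "v \<in> X" "c u = c v"
    then obtain U where U: "U \<in> F" "u \<in> U" using F(3) by blast
    then have "v \<in> U" using uv(3) unfolding c_def by blast
    moreover obtain w where "U \<subseteq> ball w (e/2)" using U F(2) unfolding G_def by blast
    ultimately have "dist w u < e/2" "dist w v < e/2" using U by auto
    then show "dist u v < e" by (metis dist_commute dist_triangle_half_l)
  qed
qed

lemma iter_props:
  assumes "continuous_on X \<alpha>" "\<alpha> ` X \<subseteq> X"
  shows "continuous_on X (\<alpha> ^^ n) \<and> (\<alpha> ^^ n) ` X \<subseteq> X"
proof (induction n)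
  case 0 then show ?case by (simp add: continuous_on_id)
next
  case (Suc n)
  then have "continuous_on ((\<alpha> ^^ n) ` X) \<alpha>" using assms(1) continuous_on_subset by blast
  then have "continuous_on X (\<alpha> \<circ> \<alpha> ^^ n)" using Suc continuous_on_compose by blast
  moreover have "(\<alpha> \<circ> \<alpha> ^^ n) ` X \<subseteq> X" using Suc assms(2) by (auto simp: image_subset_iff)
  ultimately show ?case by simp
qed

lemma fiber_preimage:
  fixes X :: "'a::metric_space set"
  assumes "continuous_on X f" "f ` X \<subseteq> X" "openin (top_of_set X) P"
  shows "openin (top_of_set X) (X \<inter> f -` P)"
proof -
  obtain T where T: "open T" "P = X \<inter> T" using assms(3) openin_open by blast
  have "X \<inter> f -` P = X \<inter> f -` T" using assms(2) T(2) by auto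
  then show ?thesis using continuous_openin_preimage_gen[OF assms(1) T(1)] by simp
qed

lemma runs:
  fixes X :: "'a::metric_space set"
  assumes "compact X" "continuous_on X \<alpha>" "\<alpha> ` X \<subseteq> X"
    and fib: "\<And>u. u \<in> X \<Longrightarrow> openin (top_of_set X) {v \<in> X. c v = c u}"
  shows "\<exists>\<delta>>0. \<forall>u\<in>X. \<forall>v\<in>X. dist u v < \<delta> \<longrightarrow> (\<forall>j\<le>K. c ((\<alpha>^^j) u) = c ((\<alpha>^^j) v))"
proof (cases "X = {}")
  case True then show ?thesis by (auto intro: exI[of _ 1])
next
  case False
  note it = iter_props[OF assms(2,3)]
  define Ow where "Ow w = {u \<in> X. \<forall>j\<le>K. c ((\<alpha>^^j) u) = c ((\<alpha>^^j) w)}" for w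
  have op: "openin (top_of_set X) (Ow w)" if "w \<in> X" for w
  proof -
    have "Ow w = (\<Inter>j\<in>{..K}. X \<inter> (\<alpha>^^j) -` {v \<in> X. c v = c ((\<alpha>^^j) w)}) \<inter> topspace (top_of_set X)"
      using it unfolding Ow_def by auto
    also have "openin (top_of_set X) \<dots>"
    proof (rule openin_INT)
      fix j assume "j \<in> {..K}"
      have "(\<alpha>^^j) w \<in> X" using it that by blast
      then show "openin (top_of_set X) (X \<inter> (\<alpha>^^j) -` {v \<in> X. c v = c ((\<alpha>^^j) w)})"
        using fiber_preimage it fib by blast
    qed simp
    finally show ?thesis .
  qed
  have "\<forall>w\<in>X. \<exists>T. open T \<and> Ow w = X \<inter> T" using op openin_open by blast
  then obtain W where W: "\<And>w. w \<in> X \<Longrightarrow> open (W w) \<and> Ow w = X \<inter> W w" by metis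
  have cov: "X \<subseteq> \<Union>(W ` X)"
  proof
    fix w assume "w \<in> X"
    then have "w \<in> Ow w" unfolding Ow_def by simp
    then show "w \<in> \<Union>(W ` X)" using W \<open>w \<in> X\<close> by blast
  qed
  have ne: "W ` X \<noteq> {}" using False by simp
  have opn: "\<And>B. B \<in> W ` X \<Longrightarrow> open B" using W by auto
  obtain \<delta> where d: "0 < \<delta>" "\<And>T. \<lbrakk>T \<subseteq> X; diameter T < \<delta>\<rbrakk> \<Longrightarrow> \<exists>B \<in> W ` X. T \<subseteq> B"
    using Lebesgue_number_lemma[OF assms(1) ne cov opn] by blast
  show ?thesis
  proof (intro exI[of _ \<delta>] conjI ballI impI allI d(1))
    fix u v j assume uv: "u \<in> X" "v \<in> X" "dist u v < \<delta>" "j \<le> K"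
    then obtain w where w: "w \<in> X" "{u, v} \<subseteq> W w" using d(2)[of "{u,v}"] by (auto simp: diam2)
    then have "u \<in> Ow w" "v \<in> Ow w" using W uv by auto
    then show "c ((\<alpha>^^j) u) = c ((\<alpha>^^j) v)" using uv(4) unfolding Ow_def by auto
  qed
qed


lemma topspace_mt: "topspace (maps_top X) = (\<Pi>\<^sub>E i\<in>X. X)"
  by (simp add: maps_top_def topspace_product_topology)

lemma A_in:
  assumes "continuous_on X \<alpha>" "\<alpha> ` X \<subseteq> X"
  shows "restrict (\<alpha>^^n) X \<in> topspace (maps_top X)"
  using iter_props[OF assms, of n] unfolding topspace_mt by auto

lemma openin_eval:
  assumes "u \<in> X" "openin (top_of_set X) P"
  shows "openin (maps_top X) {g \<in> topspace (maps_top X). g u \<in> P}"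
  unfolding maps_top_def
  by (rule openin_continuous_map_preimage[OF continuous_map_product_projection[OF assms(1)]])
     (simp add: assms(2))

lemma approx:
  fixes X :: "'a::metric_space set"
  assumes cont: "continuous_on X \<alpha>" and aX: "\<alpha> ` X \<subseteq> X"
    and fib: "\<And>u. u \<in> X \<Longrightarrow> openin (top_of_set X) {v \<in> X. c v = c u}"
    and f: "f \<in> maps_top X closure_of {restrict (\<alpha>^^n) X | n. n \<in> N}"
    and uv: "u \<in> X" "v \<in> X"
  shows "\<exists>n\<in>N. c ((\<alpha>^^i) ((\<alpha>^^n) u)) = c ((\<alpha>^^i) (f u)) \<and> c ((\<alpha>^^i) ((\<alpha>^^n) v)) = c ((\<alpha>^^i) (f v))"
proof -
  note it = iter_props[OF cont aX]
  have ft: "f \<in> topspace (maps_top X)" using f unfolding in_closure_of by blast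
  then have fu: "f u \<in> X" "f v \<in> X" using uv by (auto simp: topspace_mt PiE_iff)
  define Pu where "Pu = X \<inter> (\<alpha>^^i) -` {w \<in> X. c w = c ((\<alpha>^^i) (f u))}"
  define Pv where "Pv = X \<inter> (\<alpha>^^i) -` {w \<in> X. c w = c ((\<alpha>^^i) (f v))}"
  have fi: "(\<alpha>^^i) (f u) \<in> X" "(\<alpha>^^i) (f v) \<in> X" using fu it by auto
  then have oP: "openin (top_of_set X) Pu" "openin (top_of_set X) Pv"
    unfolding Pu_def Pv_def using fiber_preimage it fib by blast+
  define G where "G = {g \<in> topspace (maps_top X). g u \<in> Pu} \<inter> {g \<in> topspace (maps_top X). g v \<in> Pv}"
  have oG: "openin (maps_top X) G" unfolding G_def
    using openin_eval[OF uv(1) oP(1)] openin_eval[OF uv(2) oP(2)] by blast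
  have "f \<in> G" unfolding G_def Pu_def Pv_def using ft fu fi by simp
  then obtain g where "g \<in> {restrict (\<alpha>^^n) X | n. n \<in> N}" "g \<in> G"
    using f oG unfolding in_closure_of by blast
  then obtain n where n: "n \<in> N" "restrict (\<alpha>^^n) X \<in> G" by blast
  then show ?thesis using uv unfolding G_def Pu_def Pv_def by auto
qed


theorem proposition4p11:
  fixes X :: "'a::metric_space set" and \<alpha> :: "'a \<Rightarrow> 'a"
  assumes "compact X" and "totally_disconnected X"
    and "continuous_on X \<alpha>" and "\<alpha> ` X = X"
    and "\<exists>x y. forward_Li_Yorke_pair X \<alpha> x y"
  shows "\<not> completely_regular (ellis_semigroup X \<alpha>) (mcomp X)"
proof
  assume CR: "completely_regular (ellis_semigroup X \<alpha>) (mcomp X)"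
  obtain x y where LY: "forward_Li_Yorke_pair X \<alpha> x y" using assms(5) by blast
  have xX: "x \<in> X" and yX: "y \<in> X" and inf0: "(INF n. dist ((\<alpha>^^n) x) ((\<alpha>^^n) y)) = 0"
    and nas: "\<not> ((\<lambda>n. dist ((\<alpha>^^n) x) ((\<alpha>^^n) y)) \<longlonglongrightarrow> 0)"
    using LY unfolding forward_Li_Yorke_pair_def by auto
  have aX: "\<alpha> ` X \<subseteq> X" using assms(4) by simp
  note it = iter_props[OF assms(3) aX]
  have itX: "(\<alpha>^^n) w \<in> X" if "w \<in> X" for n w using it that by blast
  define D where "D n = dist ((\<alpha>^^n) x) ((\<alpha>^^n) y)" for n
  have nas': "\<not> (D \<longlonglongrightarrow> 0)" using nas unfolding D_def .
  obtain e where e: "e > 0" "\<And>N. \<exists>m\<ge>N. D m \<ge> e"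
  proof -
    from nas' have "\<not> (\<forall>e>0. \<exists>N. \<forall>n\<ge>N. dist (D n) 0 < e)" unfolding lim_sequentially by simp
    then obtain e where "e > 0" "\<forall>N. \<exists>n\<ge>N. dist (D n) 0 \<ge> e" by (auto simp: not_less)
    moreover have "dist (D n) 0 = D n" for n unfolding D_def by simp
    ultimately show ?thesis using that by auto
  qed
  obtain c :: "'a \<Rightarrow> 'a set set" where
    fib: "\<And>u. u \<in> X \<Longrightarrow> openin (top_of_set X) {v \<in> X. c v = c u}" and
    cd: "\<And>u v. u \<in> X \<Longrightarrow> v \<in> X \<Longrightarrow> c u = c v \<Longrightarrow> dist u v < e"
    using cells[OF assms(1,2) e(1)] by blast
  define ag where "ag n \<longleftrightarrow> c ((\<alpha>^^n) x) = c ((\<alpha>^^n) y)" for n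
  have dis: "\<exists>m\<ge>N. \<not> ag m" for N
  proof -
    obtain m where m: "m \<ge> N" "D m \<ge> e" using e(2) by blast
    have "\<not> ag m"
    proof
      assume "ag m"
      then have "D m < e" unfolding ag_def D_def using cd itX xX yX by blast
      then show False using m by simp
    qed
    then show ?thesis using m by blast
  qed
  have Dpos: "D n > 0" for n
  proof (rule ccontr)
    assume "\<not> D n > 0"
    then have eq: "(\<alpha>^^n) x = (\<alpha>^^n) y" unfolding D_def by simp
    have "\<forall>m\<ge>n. D m = 0"
    proof (intro allI impI)
      fix m assume "n \<le> m"
      then have "(\<alpha>^^m) = (\<alpha>^^(m-n)) \<circ> (\<alpha>^^n)" by (simp add: funpow_add[symmetric])
      then show "D m = 0" unfolding D_def using eq by simp
    qed
    then have "eventually (\<lambda>m. D m = 0) sequentially" unfolding eventually_sequentially by blast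
    then have "D \<longlonglongrightarrow> 0" by (rule tendsto_eventually)
    then show False using nas' by blast
  qed
  define M where "M K = {m. 1 \<le> m \<and> \<not> ag m \<and> (\<forall>i. 1 \<le> i \<and> i \<le> K \<longrightarrow> ag (m+i))}" for K
  have Mne: "M K \<noteq> {}" for K
  proof -
    obtain \<delta> where d: "\<delta> > 0" "\<forall>u\<in>X. \<forall>v\<in>X. dist u v < \<delta> \<longrightarrow> (\<forall>j\<le>K. c ((\<alpha>^^j) u) = c ((\<alpha>^^j) v))"
      using runs[OF assms(1,3) aX fib] by blast
    obtain d0 where d0: "d0 \<ge> 1" "\<not> ag d0" using dis[of 1] by blast
    define \<eta> where "\<eta> = min \<delta> (Min (D ` {..d0}))"
    have "Min (D ` {..d0}) > 0" using Dpos by (simp add: Min_gr_iff)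
    then have eta: "\<eta> > 0" using d(1) unfolding \<eta>_def by simp
    have bdd: "bdd_below (range D)" using Dpos by (auto intro!: bdd_belowI[of _ 0] less_imp_le)
    have "(INF n. D n) < \<eta>" using inf0 eta unfolding D_def by simp
    then obtain n where n: "D n < \<eta>" using cINF_less_iff[OF _ bdd] by auto
    have nd0: "n > d0"
    proof (rule ccontr)
      assume "\<not> n > d0" then have nn: "n \<in> {..d0}" by simp
      show False using n nn unfolding \<eta>_def by auto
    qed
    have run: "ag (n + j)" if "j \<le> K" for j
    proof -
      have "dist ((\<alpha>^^n) x) ((\<alpha>^^n) y) < \<delta>" using n unfolding \<eta>_def D_def by simp
      then have "c ((\<alpha>^^j) ((\<alpha>^^n) x)) = c ((\<alpha>^^j) ((\<alpha>^^n) y))"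
        using d(2) itX xX yX that by blast
      then show ?thesis unfolding ag_def by (simp add: funpow_add add.commute)
    qed
    define J where "J = {j. 1 \<le> j \<and> j < n \<and> \<not> ag j}"
    define m where "m = Max J"
    have fin: "finite J" unfolding J_def by simp
    have "d0 \<in> J" using d0 nd0 unfolding J_def by simp
    then have mJ: "m \<in> J" and "d0 \<le> m" using Max_in[OF fin] Max_ge[OF fin] unfolding m_def by auto
    have "m \<in> M K"
      unfolding M_def
    proof (intro CollectI conjI allI impI)
      show "1 \<le> m" "\<not> ag m" using mJ unfolding J_def by auto
      fix i assume i: "1 \<le> i \<and> i \<le> K"
      show "ag (m + i)"
      proof (cases "m + i < n")
        case True
        show ?thesis
        proof (rule ccontr)
          assume "\<not> ag (m + i)"
          then have "m + i \<in> J" using True i mJ unfolding J_def by auto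
          then have "m + i \<le> m" using Max_ge[OF fin] unfolding m_def by blast
          then show False using i by simp
        qed
      next
        case False
        have "m < n" using mJ unfolding J_def by simp
        then have "m + i = n + (m + i - n)" "m + i - n \<le> K" using False i by auto
        then show ?thesis using run by metis
      qed
    qed
    then show ?thesis by blast
  qed
  let ?T = "maps_top X"
  let ?E = "ellis_semigroup X \<alpha>"
  have Eeq: "?E = ?T closure_of {restrict (\<alpha>^^n) X | n. n \<in> UNIV}"
    unfolding ellis_semigroup_def by simp
  define C where "C K = ?T closure_of {restrict (\<alpha>^^m) X | m. m \<in> M K}" for K
  have csp: "compact_space ?T"
  proof -
    have "compact_space (top_of_set X)" using assms(1)
      by (simp add: compact_space_subtopology compactin_euclidean_iff)
    then show ?thesis unfolding maps_top_def compact_space_product_topology by blast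
  qed
  have "(\<Inter>K. C K) \<noteq> {}"
  proof (rule compact_space_imp_nest[OF csp])
    show "closedin ?T (C K)" for K unfolding C_def by (rule closedin_closure_of)
    show "C K \<noteq> {}" for K
    proof -
      obtain m where "m \<in> M K" using Mne by blast
      moreover have "{restrict (\<alpha>^^m) X | m. m \<in> M K} \<subseteq> topspace ?T"
        using A_in[OF assms(3) aX] by blast
      ultimately show ?thesis unfolding C_def using closure_of_subset by blast
    qed
    show "decseq C" unfolding decseq_def C_def
    proof (intro allI impI closure_of_mono)
      fix a b :: nat assume "a \<le> b"
      then have "M b \<subseteq> M a" unfolding M_def by auto
      then show "{restrict (\<alpha>^^m) X | m. m \<in> M b} \<subseteq> {restrict (\<alpha>^^m) X | m. m \<in> M a}" by blast
    qed
  qed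
  then obtain q where q: "\<And>K. q \<in> C K" by blast
  have "{restrict (\<alpha>^^m) X | m. m \<in> M 0} \<subseteq> {restrict (\<alpha>^^n) X | n. n \<in> UNIV}" by blast
  then have qE: "q \<in> ?E" using q[of 0] closure_of_mono unfolding C_def Eeq by blast
  have inE: "f \<in> topspace ?T" if "f \<in> ?E" for f
    using that unfolding Eeq in_closure_of by blast
  have fX: "f w \<in> X" if "f \<in> ?E" "w \<in> X" for f w
    using inE[OF that(1)] that(2) by (auto simp: topspace_mt PiE_iff)
  have qx: "q x \<in> X" "q y \<in> X" using fX[OF qE] xX yX by auto
  have Q1: "c (q x) \<noteq> c (q y)"
  proof -
    obtain m where "m \<in> M 0" "c ((\<alpha>^^0) ((\<alpha>^^m) x)) = c ((\<alpha>^^0) (q x))"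
      "c ((\<alpha>^^0) ((\<alpha>^^m) y)) = c ((\<alpha>^^0) (q y))"
      using approx[OF assms(3) aX fib _ xX yX, of q "M 0" 0] q[of 0] unfolding C_def by blast
    then show ?thesis unfolding M_def ag_def by auto
  qed
  have Q2: "c ((\<alpha>^^i) (q x)) = c ((\<alpha>^^i) (q y))" if a1: "1 \<le> i" for i
  proof -
    obtain m where "m \<in> M i" "c ((\<alpha>^^i) ((\<alpha>^^m) x)) = c ((\<alpha>^^i) (q x))"
      "c ((\<alpha>^^i) ((\<alpha>^^m) y)) = c ((\<alpha>^^i) (q y))"
      using approx[OF assms(3) aX fib _ xX yX, of q "M i" i] q[of i] unfolding C_def by blast
    moreover have "ag (m + i)" using \<open>m \<in> M i\<close> a1 unfolding M_def by auto
    ultimately show ?thesis unfolding ag_def by (simp add: funpow_add add.commute)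
  qed
  have Rpres: "c ((\<alpha>^^i) (f u)) = c ((\<alpha>^^i) (f v))"
    if a1: "f \<in> ?E" and a2: "u \<in> X" and a3: "v \<in> X" and a4: "\<And>j. c ((\<alpha>^^j) u) = c ((\<alpha>^^j) v)" for f u v i
  proof -
    obtain n where "c ((\<alpha>^^i) ((\<alpha>^^n) u)) = c ((\<alpha>^^i) (f u))"
      "c ((\<alpha>^^i) ((\<alpha>^^n) v)) = c ((\<alpha>^^i) (f v))"
      using approx[OF assms(3) aX fib _ a2 a3, of f UNIV i] a1 unfolding Eeq by blast
    moreover have "c ((\<alpha>^^(i+n)) u) = c ((\<alpha>^^(i+n)) v)" using a4 by blast
    ultimately show ?thesis by (simp add: funpow_add)
  qed
  define S1 where "S1 = ?T closure_of {restrict (\<alpha>^^n) X | n. n \<in> {n. 1 \<le> n}}"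
  have S1pres: "c ((\<alpha>^^i) (f (q x))) = c ((\<alpha>^^i) (f (q y)))" if a1: "f \<in> S1" for f i
  proof -
    obtain n where "n \<in> {n. 1 \<le> n}" "c ((\<alpha>^^i) ((\<alpha>^^n) (q x))) = c ((\<alpha>^^i) (f (q x)))"
      "c ((\<alpha>^^i) ((\<alpha>^^n) (q y))) = c ((\<alpha>^^i) (f (q y)))"
      using approx[OF assms(3) aX fib _ qx, of f "{n. 1 \<le> n}" i] a1 unfolding S1_def by blast
    moreover have "c ((\<alpha>^^(i+n)) (q x)) = c ((\<alpha>^^(i+n)) (q y))"
      using Q2 \<open>n \<in> {n. 1 \<le> n}\<close> by simp
    ultimately show ?thesis by (simp add: funpow_add)
  qed
  have Edec: "f = restrict id X \<or> f \<in> S1" if "f \<in> ?E" for f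
  proof -
    have "{restrict (\<alpha>^^n) X | n. n \<in> UNIV} = {restrict id X} \<union> {restrict (\<alpha>^^n) X | n. n \<in> {n. 1 \<le> n}}"
    (is "?L = ?R") proof (intro equalityI subsetI)
      fix g assume "g \<in> {restrict (\<alpha>^^n) X | n. n \<in> UNIV}"
      then obtain n where g: "g = restrict (\<alpha>^^n) X" by blast
      show "g \<in> {restrict id X} \<union> {restrict (\<alpha>^^n) X | n. n \<in> {n. 1 \<le> n}}"
      proof (cases "n = 0")
        case True then show ?thesis using g by simp
      next
        case False then have "n \<in> {n. 1 \<le> n}" by simp
        then show ?thesis using g by blast
      qed
    next
      fix g assume "g \<in> {restrict id X} \<union> {restrict (\<alpha>^^n) X | n. n \<in> {n. 1 \<le> n}}"
      then show "g \<in> {restrict (\<alpha>^^n) X | n. n \<in> UNIV}"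
        by (auto intro: exI[of _ 0])
    qed
    moreover have "t1_space ?T"
    proof -
      have "Hausdorff_space (top_of_set X)"
        by (simp add: Hausdorff_space_subtopology Hausdorff_space_euclidean)
      then have "Hausdorff_space ?T" unfolding maps_top_def Hausdorff_space_product_topology by blast
      then show ?thesis by (rule Hausdorff_imp_t1_space)
    qed
    ultimately have t1: "t1_space ?T" and seq: "?L = ?R" by blast+
    have "?E = ?T closure_of ?R" using Eeq seq by metis
    then have "?E = ?T closure_of {restrict id X} \<union> S1" unfolding S1_def closure_of_Un .
    moreover have "?T closure_of {restrict id X} \<subseteq> {restrict id X}"
      using closure_of_singleton[OF t1, of "restrict id X"] by simp
    ultimately have "?E \<subseteq> {restrict id X} \<union> S1" by blast
    then show ?thesis using that by blast
  qed
  obtain z where zE: "z \<in> ?E" and eq1: "q = mcomp X (mcomp X q z) q"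
    using CR qE unfolding completely_regular_def by blast
  have qzq: "q (z (q w)) = q w" if "w \<in> X" for w
  proof -
    have "q w = mcomp X (mcomp X q z) q w" using eq1 by simp
    also have "\<dots> = q (z (q w))" using that fX[OF qE that] unfolding mcomp_def by simp
    finally show ?thesis by simp
  qed
  show False
  proof (cases "z = restrict id X")
    case True
    have qq: "q (q w) = q w" if "w \<in> X" for w
      using qzq[OF that] fX[OF qE that] True by simp
    show False
    proof (cases "q = restrict id X")
      case True
      then have "q x = x" "q y = y" using xX yX by auto
      then have "ag i" if "1 \<le> i" for i using Q2[OF that] unfolding ag_def by simp
      then show False using dis[of 1] by auto
    next
      case False
      then have "q \<in> S1" using Edec[OF qE] by blast
      then have "c ((\<alpha>^^0) (q (q x))) = c ((\<alpha>^^0) (q (q y)))" by (rule S1pres)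
      then show False using Q1 qq xX yX by simp
    qed
  next
    case False
    then have "z \<in> S1" using Edec[OF zE] by blast
    then have "c ((\<alpha>^^j) (z (q x))) = c ((\<alpha>^^j) (z (q y)))" for j by (rule S1pres)
    then have "c ((\<alpha>^^0) (q (z (q x)))) = c ((\<alpha>^^0) (q (z (q y))))"
      using Rpres[OF qE fX[OF zE qx(1)] fX[OF zE qx(2)]] by blast
    then show False using Q1 qzq xX yX by simp
  qed
qed

end
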